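(* Let $n,t \ge 1$ be integers, and let $G$ be a simple graph on $n$ vertices such that no forest on $2t+1$ vertices is an induced subgraph of $G$. Then $|E(G)| \ge g(n,t)$. If equality holds and $n < 4t$, then every component of $G$ is a complete graph on $1$, $3$ or $4$ vertices. If equality holds and $n \ge 4t$, then $G \cong G_{n,t}$.
   Context: The function $g:\mathbb{N}\times\mathbb{N}\to\mathbb{N}$ is defined recursively by: $g(n,t) = 0$ for $n < 2t$; $g(n,t) = 3(n-2t)$ for $2t \le n \le 4t$; and $g(n,t) = g(n-1,t) + \lceil n/t \rceil - 1$ for $n > 4t$. $G_{n,t}$ denotes the graph on $n$ vertices which is a disjoint union of $t$ complete graphs whose numbers of vertices pairwise differ by at most one. *)

theory Defs
  imports Complex_Main
begin

fun g :: "nat \<Rightarrow> nat \<Rightarrow> nat" where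
  "g n t = (if n < 2*t then 0
            else if n \<le> 4*t then 3*(n - 2*t)
            else g (n - 1) t + nat \<lceil>real n / real t\<rceil> - 1)"

definition simple_graph :: "'a set \<Rightarrow> ('a \<Rightarrow> 'a \<Rightarrow> bool) \<Rightarrow> bool" where
  "simple_graph V E \<longleftrightarrow> finite V \<and> (\<forall>u w. E u w \<longrightarrow> u \<in> V \<and> w \<in> V)
     \<and> (\<forall>u w. E u w \<longrightarrow> E w u) \<and> (\<forall>u. \<not> E u u)"

definition edges :: "'a set \<Rightarrow> ('a \<Rightarrow> 'a \<Rightarrow> bool) \<Rightarrow> 'a set set" where
  "edges V E = {{u, w} | u w. u \<in> V \<and> w \<in> V \<and> E u w}"

definition is_cycle_in :: "'a set \<Rightarrow> ('a \<Rightarrow> 'a \<Rightarrow> bool) \<Rightarrow> 'a list \<Rightarrow> bool" where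
  "is_cycle_in S E vs \<longleftrightarrow> length vs \<ge> 3 \<and> distinct vs \<and> set vs \<subseteq> S
     \<and> (\<forall>i. Suc i < length vs \<longrightarrow> E (vs ! i) (vs ! Suc i))
     \<and> E (last vs) (hd vs)"

definition induced_forest :: "'a set \<Rightarrow> ('a \<Rightarrow> 'a \<Rightarrow> bool) \<Rightarrow> bool" where
  "induced_forest S E \<longleftrightarrow> (\<nexists>vs. is_cycle_in S E vs)"

definition has_induced_forest :: "'a set \<Rightarrow> ('a \<Rightarrow> 'a \<Rightarrow> bool) \<Rightarrow> nat \<Rightarrow> bool" where
  "has_induced_forest V E k \<longleftrightarrow> (\<exists>S \<subseteq> V. card S = k \<and> induced_forest S E)"

definition component :: "'a set \<Rightarrow> ('a \<Rightarrow> 'a \<Rightarrow> bool) \<Rightarrow> 'a \<Rightarrow> 'a set" where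
  "component V E v = {u \<in> V. (\<lambda>x y. E x y \<and> x \<in> V \<and> y \<in> V)\<^sup>*\<^sup>* v u}"

definition components :: "'a set \<Rightarrow> ('a \<Rightarrow> 'a \<Rightarrow> bool) \<Rightarrow> 'a set set" where
  "components V E = component V E ` V"

definition is_clique :: "'a set \<Rightarrow> ('a \<Rightarrow> 'a \<Rightarrow> bool) \<Rightarrow> bool" where
  "is_clique C E \<longleftrightarrow> (\<forall>u\<in>C. \<forall>w\<in>C. u \<noteq> w \<longrightarrow> E u w)"

text \<open>G_{n,t}: vertices {0..<n}, vertex i in part (i mod t); t cliques whose sizes
  pairwise differ by at most one.\<close>
definition Gnt_adj :: "nat \<Rightarrow> nat \<Rightarrow> nat \<Rightarrow> bool" where
  "Gnt_adj t i j \<longleftrightarrow> i \<noteq> j \<and> i mod t = j mod t"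

definition graph_iso :: "'a set \<Rightarrow> ('a \<Rightarrow> 'a \<Rightarrow> bool) \<Rightarrow> 'b set \<Rightarrow> ('b \<Rightarrow> 'b \<Rightarrow> bool) \<Rightarrow> bool" where
  "graph_iso V E W F \<longleftrightarrow> (\<exists>f. bij_betw f V W \<and> (\<forall>u\<in>V. \<forall>w\<in>V. E u w \<longleftrightarrow> F (f u) (f w)))"

end

theory Submission
  imports Defs
begin



definition dg :: "'a set \<Rightarrow> ('a \<Rightarrow> 'a \<Rightarrow> bool) \<Rightarrow> 'a \<Rightarrow> nat" where
  "dg V E v = card {u\<in>V. E v u}"

definition hw :: "nat \<Rightarrow> real" where
  "hw d = (if d \<le> 1 then 1 else 2 / (real d + 1))"

lemma cyc_adj:
  assumes "is_cycle_in S E vs" "i < length vs"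
  shows "E (vs!i) (vs!((i+1) mod length vs))"
proof (cases "Suc i < length vs")
  case True then show ?thesis using assms unfolding is_cycle_in_def by auto
next
  case False
  then have "Suc i = length vs" using assms(2) by simp
  then have i: "i = length vs - 1" "(i+1) mod length vs = 0" by auto
  have "vs \<noteq> []" using assms(2) by auto
  then show ?thesis using assms(1) i unfolding is_cycle_in_def
    by (simp add: last_conv_nth hd_conv_nth)
qed

lemma forest_subset: "induced_forest S E \<Longrightarrow> T \<subseteq> S \<Longrightarrow> induced_forest T E"
  unfolding induced_forest_def is_cycle_in_def by blast

lemma forest_insert:
  assumes "induced_forest S E" "\<forall>u w. E u w \<longrightarrow> E w u" "S \<subseteq> V" "z \<in> V" "finite V"
    "card {u\<in>V. E z u} \<le> 1"
  shows "induced_forest (insert z S) E"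
  unfolding induced_forest_def
proof
  assume "\<exists>vs. is_cycle_in (insert z S) E vs"
  then obtain vs where cy: "is_cycle_in (insert z S) E vs" by blast
  define k where "k = length vs"
  have k3: "k \<ge> 3" and dist: "distinct vs" and sv: "set vs \<subseteq> insert z S"
    using cy unfolding is_cycle_in_def k_def by auto
  show False
  proof (cases "z \<in> set vs")
    case False
    then have "set vs \<subseteq> S" using sv by auto
    then have "is_cycle_in S E vs" using cy unfolding is_cycle_in_def by auto
    then show False using assms(1) unfolding induced_forest_def by blast
  next
    case True
    then obtain i where i: "i < k" "vs!i = z" unfolding k_def by (metis in_set_conv_nth)
    define j1 where "j1 = (i+1) mod k"
    define j2 where "j2 = (i+k-1) mod k"
    have j1k: "j1 < k" "j2 < k" using k3 unfolding j1_def j2_def by auto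
    have "(j2 + 1) mod k = Suc (i+k-1) mod k" unfolding j2_def by (simp add: mod_Suc_eq)
    also have "\<dots> = (i + k) mod k" using k3 by simp
    also have "\<dots> = i" using i by simp
    finally have "(j2 + 1) mod k = i" .
    then have e2: "E (vs!j2) z" using cyc_adj[OF cy, of j2] j1k i unfolding k_def by simp
    have e1: "E z (vs!j1)" using cyc_adj[OF cy, of i] i unfolding k_def j1_def by simp
    have "j1 \<noteq> j2"
    proof
      assume "j1 = j2"
      then have "(i+1) mod k = (i + k - 1) mod k" unfolding j1_def j2_def .
      then show False using i k3
      proof (cases "i = 0")
        case True
        have "j1 = 1" unfolding j1_def using True k3 by simp
        moreover have "j2 = k - 1" unfolding j2_def using True k3 by simp
        ultimately show False using \<open>j1 = j2\<close> k3 by linarith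
      next
        case False
        have "i + k - 1 = (i - 1) + k" using False by simp
        then have "j2 = (i - 1 + k) mod k" unfolding j2_def by (simp only:)
        also have "\<dots> = (i - 1) mod k" by (rule mod_add_self2)
        also have "\<dots> = i - 1" using i by simp
        finally have "j2 = i - 1" .
        moreover have "j1 = i + 1 \<or> (j1 = 0 \<and> i = k - 1)"
        proof (cases "i + 1 < k")
          case True then show ?thesis unfolding j1_def by simp
        next
          case False then have "i + 1 = k" using i by simp
          then show ?thesis unfolding j1_def by simp
        qed
        ultimately show False using \<open>j1 = j2\<close> False k3 by auto
      qed
    qed
    then have ne: "vs!j1 \<noteq> vs!j2" using dist j1k unfolding k_def by (simp add: nth_eq_iff_index_eq)
    have "vs!j1 \<in> V" "vs!j2 \<in> V" using sv j1k assms(3,4) unfolding k_def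
      by (meson nth_mem subset_iff insert_subset)+
    then have "{vs!j1, vs!j2} \<subseteq> {u\<in>V. E z u}" using e1 e2 assms(2) by auto
    then have "card {vs!j1, vs!j2} \<le> card {u\<in>V. E z u}"
      by (intro card_mono) (use assms(5) in auto)
    then show False using ne assms(6) by simp
  qed
qed




definition dl :: "nat \<Rightarrow> real" where "dl d = hw (d - 1) - hw d"

definition delta :: "'a set \<Rightarrow> ('a \<Rightarrow> 'a \<Rightarrow> bool) \<Rightarrow> 'a \<Rightarrow> real" where
  "delta V E z = (\<Sum>u\<in>V-{z}. hw (dg (V-{z}) E u)) + (if dg V E z \<le> 1 then 1 else 0)
     - (\<Sum>u\<in>V. hw (dg V E u))"

lemma dg_remove:
  assumes "finite V" "u \<in> V - {z}" "z \<in> V"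
  shows "dg (V-{z}) E u = (if E u z then dg V E u - 1 else dg V E u)"
proof -
  have "{w\<in>V-{z}. E u w} = {w\<in>V. E u w} - {z}" by auto
  then show ?thesis unfolding dg_def using assms by (simp add: card_Diff_singleton_if)
qed

lemma hw_remove:
  assumes "finite V" "u \<in> V - {z}" "z \<in> V"
  shows "hw (dg (V-{z}) E u) = hw (dg V E u) + (if E u z then dl (dg V E u) else 0)"
  using dg_remove[OF assms, of E] unfolding dl_def by auto

lemma delta_alt:
  assumes "finite V" "z \<in> V" "\<forall>u. \<not> E u u"
  shows "delta V E z = (\<Sum>u\<in>V. if E u z then dl (dg V E u) else 0)
     + (if dg V E z \<le> 1 then 1 else 0) - hw (dg V E z)"
proof -
  have "(\<Sum>u\<in>V-{z}. hw (dg (V-{z}) E u))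
      = (\<Sum>u\<in>V-{z}. hw (dg V E u) + (if E u z then dl (dg V E u) else 0))"
    using hw_remove[OF assms(1) _ assms(2)] by (intro sum.cong) auto
  also have "\<dots> = (\<Sum>u\<in>V-{z}. hw (dg V E u)) + (\<Sum>u\<in>V-{z}. (if E u z then dl (dg V E u) else 0))"
    by (rule sum.distrib)
  also have "(\<Sum>u\<in>V-{z}. (if E u z then dl (dg V E u) else 0)) = (\<Sum>u\<in>V. (if E u z then dl (dg V E u) else 0))"
    using sum.remove[OF assms(1,2), of "\<lambda>u. if E u z then dl (dg V E u) else 0"] assms(3) by simp
  finally show ?thesis unfolding delta_def
    using sum.remove[OF assms(1,2), of "\<lambda>u. hw (dg V E u)"] by simp
qed

lemma per_d: "real d * dl d + (if d \<le> 1 then 1 else 0) - hw d = 0"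
proof -
  consider "d = 0" | "d = 1" | "d = 2" | "d \<ge> 3" by linarith
  then show ?thesis
  proof cases
    case 4
    then have "hw (d - 1) = 2 / real d" unfolding hw_def by (auto simp: of_nat_diff)
    moreover have "hw d = 2 / (real d + 1)" using 4 unfolding hw_def by auto
    ultimately show ?thesis unfolding dl_def using 4 by (simp add: field_simps)
  qed (auto simp: dl_def hw_def)
qed

lemma delta_sum:
  assumes "finite V" "\<forall>u w. E u w \<longrightarrow> E w u" "\<forall>u. \<not> E u u"
  shows "(\<Sum>z\<in>V. delta V E z) = 0"
proof -
  have "(\<Sum>z\<in>V. delta V E z) = (\<Sum>z\<in>V. (\<Sum>u\<in>V. if E u z then dl (dg V E u) else 0)
     + ((if dg V E z \<le> 1 then 1 else 0) - hw (dg V E z)))"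
    using delta_alt[where V=V and E=E, OF assms(1) _ assms(3)] by (intro sum.cong) auto
  also have "\<dots> = (\<Sum>z\<in>V. \<Sum>u\<in>V. if E u z then dl (dg V E u) else 0)
     + (\<Sum>z\<in>V. (if dg V E z \<le> 1 then 1 else 0) - hw (dg V E z))"
    by (rule sum.distrib)
  also have "(\<Sum>z\<in>V. \<Sum>u\<in>V. if E u z then dl (dg V E u) else 0)
      = (\<Sum>u\<in>V. \<Sum>z\<in>V. if E u z then dl (dg V E u) else 0)"
    by (rule sum.swap)
  also have "\<dots> = (\<Sum>u\<in>V. real (dg V E u) * dl (dg V E u))"
  proof (rule sum.cong)
    fix u assume "u \<in> V"
    have "(\<Sum>z\<in>V. if E u z then dl (dg V E u) else 0) = (\<Sum>z\<in>{z\<in>V. E u z}. dl (dg V E u))"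
      using sum.inter_filter[OF assms(1), of "\<lambda>z. dl (dg V E u)" "E u"] by simp
    also have "\<dots> = real (dg V E u) * dl (dg V E u)" unfolding dg_def by simp
    finally show "(\<Sum>z\<in>V. if E u z then dl (dg V E u) else 0) = real (dg V E u) * dl (dg V E u)" .
  qed simp
  finally have "(\<Sum>z\<in>V. delta V E z) = (\<Sum>u\<in>V. real (dg V E u) * dl (dg V E u)
     + ((if dg V E u \<le> 1 then 1 else 0) - hw (dg V E u)))"
    by (simp add: sum.distrib)
  also have "\<dots> = 0" by (intro sum.neutral ballI) (simp only: per_d diff_add_eq add_diff_eq)
  finally show ?thesis .
qed




lemma forest_empty: "induced_forest {} E"
  unfolding induced_forest_def is_cycle_in_def by auto

lemma step_ext:
  assumes "finite V" "\<forall>u w. E u w \<longrightarrow> E w u" "z \<in> V" "S' \<subseteq> V - {z}" "induced_forest S' E"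
  shows "\<exists>S\<subseteq>V. induced_forest S E \<and> real (card S') + (if dg V E z \<le> 1 then 1 else 0) \<le> real (card S)"
proof (cases "dg V E z \<le> 1")
  case True
  have "induced_forest (insert z S') E"
    using forest_insert[OF assms(5) assms(2) _ assms(3,1)] assms(4) True unfolding dg_def by auto
  moreover have "card (insert z S') = card S' + 1"
  proof -
    have "z \<notin> S'" using assms(4) by auto
    moreover have "finite S'" using finite_subset[OF assms(4)] assms(1) by auto
    ultimately show ?thesis by simp
  qed
  ultimately show ?thesis using True assms(3,4) by (intro exI[of _ "insert z S'"]) auto
next
  case False
  then show ?thesis using assms by (intro exI[of _ S']) auto
qed

lemma exists_delta_nonneg:
  assumes "finite V" "V \<noteq> {}" "\<forall>u w. E u w \<longrightarrow> E w u" "\<forall>u. \<not> E u u"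
  shows "\<exists>z\<in>V. delta V E z \<ge> 0"
proof (rule ccontr)
  assume "\<not> ?thesis"
  then have "\<forall>z\<in>V. delta V E z < 0" by auto
  then have "(\<Sum>z\<in>V. delta V E z) < (\<Sum>z\<in>V. 0)"
    by (intro sum_strict_mono assms(1,2)) auto
  then show False using delta_sum[OF assms(1,3,4)] by simp
qed

lemma aks:
  assumes "finite V" "\<forall>u w. E u w \<longrightarrow> E w u" "\<forall>u. \<not> E u u"
  shows "\<exists>S\<subseteq>V. induced_forest S E \<and> (\<Sum>v\<in>V. hw (dg V E v)) \<le> real (card S)"
  using assms(1)
proof (induction V rule: finite_psubset_induct)
  case (psubset V)
  show ?case
  proof (cases "V = {}")
    case True then show ?thesis using forest_empty by auto
  next
    case False
    obtain z where z: "z \<in> V" "delta V E z \<ge> 0"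
      using exists_delta_nonneg[OF psubset(1) False assms(2,3)] by blast
    obtain S' where S': "S' \<subseteq> V - {z}" "induced_forest S' E"
      "(\<Sum>v\<in>V-{z}. hw (dg (V-{z}) E v)) \<le> real (card S')"
      using psubset(2)[of "V - {z}"] z(1) by blast
    obtain S where S: "S \<subseteq> V" "induced_forest S E"
      "real (card S') + (if dg V E z \<le> 1 then 1 else 0) \<le> real (card S)"
      using step_ext[OF psubset(1) assms(2) z(1) S'(1,2)] by blast
    have "(\<Sum>v\<in>V. hw (dg V E v)) \<le> real (card S)"
      using S(3) S'(3) z(2) unfolding delta_def by linarith
    then show ?thesis using S by blast
  qed
qed

lemma forest3:
  assumes "\<forall>u w. E u w \<longrightarrow> E w u" "\<not> E a b" "a \<noteq> b" "a \<noteq> c" "b \<noteq> c"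
  shows "induced_forest {a,b,c} E"
  unfolding induced_forest_def
proof
  assume "\<exists>vs. is_cycle_in {a,b,c} E vs"
  then obtain vs where cy: "is_cycle_in {a,b,c} E vs" by blast
  then have d: "distinct vs" "set vs \<subseteq> {a,b,c}" "length vs \<ge> 3" unfolding is_cycle_in_def by auto
  have "length vs = card (set vs)" using d(1) by (simp add: distinct_card)
  also have "\<dots> \<le> card {a,b,c}" by (rule card_mono) (use d(2) in auto)
  also have "\<dots> = 3" using assms(3-5) by simp
  finally have l3: "length vs = 3" using d(3) by simp
  then have "card (set vs) = card {a,b,c}" using d(1) assms(3-5) by (simp add: distinct_card)
  then have sv: "set vs = {a,b,c}" using d(2) by (intro card_subset_eq) auto
  obtain x y w where vs: "vs = [x,y,w]" using l3
    by (auto simp: numeral_3_eq_3 length_Suc_conv)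
  have "E x y" "E y w" "E w x" using cyc_adj[OF cy, of 0] cyc_adj[OF cy, of 1] cyc_adj[OF cy, of 2] vs by auto
  moreover then have "E y x" "E w y" "E x w" using assms(1) by auto
  moreover have "a \<in> {x,y,w}" "b \<in> {x,y,w}" using sv vs by auto
  ultimately show False using assms(2,3) by auto
qed

lemma aks_strict:
  assumes "finite V" "\<forall>u w. E u w \<longrightarrow> E w u" "\<forall>u. \<not> E u u"
  shows "a \<in> V \<Longrightarrow> b \<in> V \<Longrightarrow> c \<in> V \<Longrightarrow> a \<noteq> b \<Longrightarrow> E a c \<Longrightarrow> E c b \<Longrightarrow> \<not> E a b \<Longrightarrow>
    \<exists>S\<subseteq>V. induced_forest S E \<and> (\<Sum>v\<in>V. hw (dg V E v)) < real (card S)"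
  using assms(1)
proof (induction V rule: finite_psubset_induct)
  case (psubset V)
  have ac: "a \<noteq> c" "b \<noteq> c" using psubset.prems assms(3) by auto
  have Vne: "V \<noteq> {}" using psubset.prems by auto
  show ?case
  proof (cases "\<exists>z\<in>V. delta V E z > 0")
    case True
    then obtain z where z: "z \<in> V" "delta V E z > 0" by blast
    obtain S' where S': "S' \<subseteq> V - {z}" "induced_forest S' E"
      "(\<Sum>v\<in>V-{z}. hw (dg (V-{z}) E v)) \<le> real (card S')"
      using aks[OF _ assms(2,3), of "V - {z}"] psubset(1) by blast
    obtain S where S: "S \<subseteq> V" "induced_forest S E"
      "real (card S') + (if dg V E z \<le> 1 then 1 else 0) \<le> real (card S)"
      using step_ext[OF psubset(1) assms(2) z(1) S'(1,2)] by blast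
    have "(\<Sum>v\<in>V. hw (dg V E v)) < real (card S)"
      using S(3) S'(3) z(2) unfolding delta_def by linarith
    then show ?thesis using S by blast
  next
    case False
    then have nonpos: "\<forall>z\<in>V. delta V E z \<le> 0" by auto
    have allz: "\<forall>z\<in>V. delta V E z = 0"
    proof -
      have "(\<Sum>z\<in>V. - delta V E z) = 0" using delta_sum[OF psubset(1) assms(2,3)]
        by (simp add: sum_negf)
      then show ?thesis using sum_nonneg_eq_0_iff[OF psubset(1), of "\<lambda>z. - delta V E z"] nonpos
        by auto
    qed
    show ?thesis
    proof (cases "V \<subseteq> {a,b,c}")
      case True
      then have V: "V = {a,b,c}" using psubset.prems by auto
      have "{u\<in>V. E c u} = {a,b}" using V psubset.prems assms(2,3) by auto
      then have dgc: "dg V E c = 2" unfolding dg_def using psubset.prems(4) by simp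
      have hle: "hw d \<le> 1" for d unfolding hw_def by auto
      have "(\<Sum>v\<in>V. hw (dg V E v)) = hw (dg V E a) + hw (dg V E b) + hw (dg V E c)"
        using V psubset.prems(4) ac by simp
      also have "\<dots> \<le> 1 + 1 + 2/3" using hle[of "dg V E a"] hle[of "dg V E b"] dgc
        by (simp add: hw_def)
      also have "\<dots> < real (card V)" using V psubset.prems(4) ac by simp
      finally show ?thesis using forest3[OF assms(2) psubset.prems(7,4) ac] V by blast
    next
      case False
      then obtain z where z: "z \<in> V" "z \<notin> {a,b,c}" by blast
      obtain S' where S': "S' \<subseteq> V - {z}" "induced_forest S' E"
        "(\<Sum>v\<in>V-{z}. hw (dg (V-{z}) E v)) < real (card S')"
        using psubset(2)[of "V - {z}"] z psubset.prems by blast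
      obtain S where S: "S \<subseteq> V" "induced_forest S E"
        "real (card S') + (if dg V E z \<le> 1 then 1 else 0) \<le> real (card S)"
        using step_ext[OF psubset(1) assms(2) z(1) S'(1,2)] by blast
      have "delta V E z = 0" using allz z(1) by blast
      then have "(\<Sum>v\<in>V. hw (dg V E v)) < real (card S)"
        using S(3) S'(3) unfolding delta_def by linarith
      then show ?thesis using S by blast
    qed
  qed
qed




lemma edgeI: "u \<in> V \<Longrightarrow> w \<in> V \<Longrightarrow> E u w \<Longrightarrow> {u,w} \<in> edges V E"
  unfolding edges_def by blast

lemma handshake:
  assumes "finite V" "\<forall>u w. E u w \<longrightarrow> E w u" "\<forall>u. \<not> E u u"
  shows "2 * card (edges V E) = (\<Sum>v\<in>V. dg V E v)"
proof -
  define D where "D = Sigma V (\<lambda>u. {w\<in>V. E u w})"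
  define fb where "fb e = {p\<in>D. {fst p, snd p} = e}" for e
  have cD: "card D = (\<Sum>v\<in>V. dg V E v)" unfolding D_def dg_def using assms(1) by simp
  have fe: "finite (edges V E)"
  proof -
    have "edges V E \<subseteq> (\<lambda>p. {fst p, snd p}) ` (V \<times> V)"
    proof
      fix e assume "e \<in> edges V E"
      then obtain u w where "e = {u,w}" "u \<in> V" "w \<in> V" unfolding edges_def by blast
      then show "e \<in> (\<lambda>p. {fst p, snd p}) ` (V \<times> V)" by (intro image_eqI[of _ _ "(u,w)"]) auto
    qed
    then show ?thesis using finite_imageI[OF finite_cartesian_product[OF assms(1) assms(1)]]
      by (rule finite_subset)
  qed
  have finD: "finite D" unfolding D_def using assms(1) by auto
  have DU: "D = (\<Union>e\<in>edges V E. fb e)"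
  proof
    show "D \<subseteq> (\<Union>e\<in>edges V E. fb e)"
    proof
      fix p assume p: "p \<in> D"
      then have "{fst p, snd p} \<in> edges V E" unfolding D_def by (cases p) (simp add: edgeI)
      then show "p \<in> (\<Union>e\<in>edges V E. fb e)" using p unfolding fb_def by blast
    qed
  qed (auto simp: fb_def)
  have "card D = (\<Sum>e\<in>edges V E. card (fb e))" unfolding DU
    by (rule card_UN_disjoint) (use fe finD in \<open>auto simp: fb_def\<close>)
  also have "\<dots> = (\<Sum>e\<in>edges V E. 2)"
  proof (rule sum.cong)
    fix e assume "e \<in> edges V E"
    then obtain a b where ab: "e = {a,b}" "a \<in> V" "b \<in> V" "E a b" unfolding edges_def by auto
    then have "a \<noteq> b" using assms(3) by auto
    have "fb e = {(a,b),(b,a)}"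
    proof
      show "fb e \<subseteq> {(a,b),(b,a)}"
      proof
        fix p assume "p \<in> fb e"
        then have "{fst p, snd p} = {a,b}" unfolding fb_def ab(1) by simp
        then have "(fst p = a \<and> snd p = b) \<or> (fst p = b \<and> snd p = a)" by (simp add: doubleton_eq_iff)
        then show "p \<in> {(a,b),(b,a)}" by (cases p) auto
      qed
      have "E b a" using ab(4) assms(2) by blast
      then have "(a,b) \<in> D" "(b,a) \<in> D" unfolding D_def using ab by auto
      then show "{(a,b),(b,a)} \<subseteq> fb e" unfolding fb_def ab(1) by (auto simp: insert_commute)
    qed
    then show "card (fb e) = 2" using \<open>a \<noteq> b\<close> by simp
  qed simp
  finally show ?thesis using cD by simp
qed

lemma forest_bound:
  assumes "\<not> has_induced_forest V E k" "S \<subseteq> V" "induced_forest S E" "finite V"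
  shows "card S < k"
proof (rule ccontr)
  assume "\<not> card S < k"
  then have "k \<le> card S" by simp
  then obtain T where T: "T \<subseteq> S" "card T = k" by (rule obtain_subset_with_card_n)
  then have "induced_forest T E" using forest_subset assms(3) by blast
  moreover have "T \<subseteq> V" using T assms(2) by blast
  ultimately have "has_induced_forest V E k" unfolding has_induced_forest_def using T by blast
  then show False using assms(1) by simp
qed




lemma g_small: "n < 2*t \<Longrightarrow> g n t = 0" by simp
lemma g_mid: "2*t \<le> n \<Longrightarrow> n \<le> 4*t \<Longrightarrow> g n t = 3*(n - 2*t)" by simp

lemma ceil_lem:
  assumes "t \<ge> 1"
  shows "nat \<lceil>real (Suc n) / real t\<rceil> = n div t + 1"
proof -
  have "\<lceil>real (Suc n) / real t\<rceil> = int (n div t + 1)"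
  proof (rule ceiling_unique)
    have "real (n div t) * real t \<le> real n"
      by (metis of_nat_le_iff of_nat_mult div_mult_mod_eq le_add1)
    then have "real (n div t) \<le> real n / real t" using assms by (simp add: field_simps)
    then show "of_int (int (n div t + 1)) - 1 < real (Suc n) / real t"
      using assms by (simp add: field_simps)
    have h: "t * (n div t) + n mod t = n" by (rule mult_div_mod_eq)
    have m: "n mod t < t" using assms by simp
    have "Suc n \<le> t + t * (n div t)" using h m by linarith
    then have "Suc n \<le> (n div t + 1) * t" by (simp add: algebra_simps)
    then have "real (Suc n) \<le> real ((n div t + 1) * t)" by linarith
    then show "real (Suc n) / real t \<le> of_int (int (n div t + 1))"
      using assms by (simp add: field_simps)
  qed
  then show ?thesis by simp
qed

lemma g_big:
  assumes "t \<ge> 1" "n \<ge> 4*t"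
  shows "2 * g n t = (n div t) * (n + n mod t - t)"
  using assms(2)
proof (induction n rule: dec_induct)
  case base
  then show ?case using assms(1) by simp
next
  case (step n)
  have gs: "g (Suc n) t = g n t + n div t"
    using step(1) assms(1) ceil_lem[OF assms(1), of n] by simp
  define q where "q = n div t"
  define r where "r = n mod t"
  have nq: "n = q*t + r" "r < t" unfolding q_def r_def using assms(1) by auto
  have "q \<ge> 4" unfolding q_def using step(1) assms(1)
    by (metis div_le_mono nonzero_mult_div_cancel_right not_one_le_zero)
  then have qq: "q * t \<le> q * (q * t)" by simp
  have nt: "n \<ge> t" using step(1) by simp
  have A: "2 * g (Suc n) t = q*(n + r - t) + 2*q"
    using gs step(3) unfolding q_def r_def by (simp del: g.simps)
  show ?case
  proof (cases "r + 1 < t")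
    case True
    have sn: "Suc n = (r + 1) + q * t" using nq by simp
    have "(r + 1 + q * t) div t = q + (r + 1) div t" by (rule div_mult_self1) (use assms(1) in simp)
    then have d: "Suc n div t = q" unfolding sn using True by simp
    have m: "Suc n mod t = r + 1" unfolding sn using True by simp
    have "Suc n + (r + 1) - t = (n + r - t) + 2" using nt by simp
    then have "q * (Suc n + (r + 1) - t) = q*(n + r - t) + 2*q" by (simp add: algebra_simps)
    then show ?thesis using A d m by simp
  next
    case False
    then have rt: "r + 1 = t" using nq by simp
    then have sn: "Suc n = (q+1)*t" using nq by (simp add: algebra_simps)
    then have d: "Suc n div t = q + 1" "Suc n mod t = 0" using assms(1) by auto
    have e1: "Suc n + 0 - t = q * t" using sn by simp
    have e2: "n + r - t = n - 1" using rt nt by simp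
    have n12: "n - 1 + 2 = n + 1" using nt assms(1) by simp
    have "q*(n - 1) + 2*q = q * (n - 1 + 2)" by (simp add: algebra_simps)
    also have "\<dots> = q * (n + 1)" using n12 by simp
    also have "\<dots> = (q + 1) * (q * t)" using sn by (simp add: algebra_simps)
    finally show ?thesis using A d e1 e2 by simp
  qed
qed




lemma key_id:
  fixes x y :: real assumes "x \<ge> 0"
  shows "2*x + y*(y+1)*(2/(x+1)) - 4*y = 2*((x-y)*(x-y+1))/(x+1)"
  using assms by (simp add: field_simps)

lemma prod_pos_int:
  fixes x y :: real
  assumes "x - y \<ge> 1 \<or> x - y \<le> -2"
  shows "(x-y)*(x-y+1) > 0"
proof (cases "x - y \<ge> 1")
  case True then show ?thesis by (simp add: mult_pos_pos)
next
  case False then have "x - y \<le> -2" using assms by simp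
  then have "x - y < 0" "x - y + 1 < 0" by auto
  then show ?thesis by (simp add: mult_neg_neg)
qed

lemma lin2_strict:
  assumes "q \<ge> 4" "d \<noteq> q - 1" "d \<noteq> q"
  shows "2 * real d + real q * (real q + 1) * hw d > 4 * real q"
proof (cases "d \<le> 1")
  case True
  have "real q * (real q + 1) - 4 * real q = real q * (real q - 3)" by (simp add: algebra_simps)
  also have "\<dots> > 0" using assms(1) by (simp add: mult_pos_pos)
  finally show ?thesis using True unfolding hw_def by simp
next
  case False
  have "d \<ge> q + 1 \<or> d + 2 \<le> q" using assms by linarith
  then have "real d - real q \<ge> 1 \<or> real d - real q \<le> -2" by auto
  then have p: "(real d - real q)*(real d - real q + 1) > 0" by (rule prod_pos_int)
  have "2 * real d + real q * (real q + 1) * hw d - 4 * real q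
      = 2*((real d - real q)*(real d - real q + 1))/(real d + 1)"
    using False key_id[of "real d" "real q"] unfolding hw_def by simp
  also have "\<dots> > 0" using p by simp
  finally show ?thesis by simp
qed

lemma lin2_eq:
  assumes "q \<ge> 4" "d = q - 1 \<or> d = q"
  shows "2 * real d + real q * (real q + 1) * hw d = 4 * real q"
proof -
  have "d \<ge> 2" using assms by auto
  then have "2 * real d + real q * (real q + 1) * hw d - 4 * real q
      = 2*((real d - real q)*(real d - real q + 1))/(real d + 1)"
    using key_id[of "real d" "real q"] unfolding hw_def by simp
  also have "\<dots> = 0" using assms by (auto simp: of_nat_diff)
  finally show ?thesis by simp
qed

lemma lin2: "q \<ge> 4 \<Longrightarrow> 2 * real d + real q * (real q + 1) * hw d \<ge> 4 * real q"
  using lin2_strict[of q d] lin2_eq[of q d] by (cases "d = q - 1 \<or> d = q") auto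

lemma lin1_strict:
  assumes "d \<noteq> 0" "d \<noteq> 2" "d \<noteq> 3"
  shows "6 * hw d + real d > 6"
proof (cases "d = 1")
  case True then show ?thesis unfolding hw_def by simp
next
  case False
  then have d4: "d \<ge> 4" using assms by auto
  have p: "(real d - 2)*(real d - 3) > 0" using d4 by (simp add: mult_pos_pos)
  have "6 * hw d + real d - 6 = (real d - 2)*(real d - 3) / (real d + 1)"
    using d4 unfolding hw_def by (simp add: field_simps)
  also have "\<dots> > 0" using p by simp
  finally show ?thesis by simp
qed

lemma lin1_eq: "d = 0 \<or> d = 2 \<or> d = 3 \<Longrightarrow> 6 * hw d + real d = 6"
  unfolding hw_def by auto

lemma lin1: "6 * hw d + real d \<ge> 6"
  using lin1_strict[of d] lin1_eq[of d] by (cases "d = 0 \<or> d = 2 \<or> d = 3") auto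




definition Nb :: "'a set \<Rightarrow> ('a \<Rightarrow> 'a \<Rightarrow> bool) \<Rightarrow> 'a \<Rightarrow> 'a set" where
  "Nb V E v = insert v {u\<in>V. E v u}"

definition clus :: "'a set \<Rightarrow> ('a \<Rightarrow> 'a \<Rightarrow> bool) \<Rightarrow> bool" where
  "clus V E \<longleftrightarrow> (\<forall>a b c. a\<in>V \<longrightarrow> b\<in>V \<longrightarrow> c\<in>V \<longrightarrow> a\<noteq>b \<longrightarrow> E a c \<longrightarrow> E c b \<longrightarrow> E a b)"

lemma Nb_sub: "v \<in> V \<Longrightarrow> Nb V E v \<subseteq> V" unfolding Nb_def by auto

lemma Nb_card: "finite V \<Longrightarrow> \<not> E v v \<Longrightarrow> card (Nb V E v) = dg V E v + 1"
  unfolding Nb_def dg_def by simp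

lemma Nb_eq:
  assumes "simple_graph V E" "clus V E" "v \<in> V" "u \<in> Nb V E v"
  shows "Nb V E u = Nb V E v"
proof (cases "u = v")
  case True then show ?thesis by simp
next
  case False
  have sym: "\<And>a b. E a b \<Longrightarrow> E b a" and inV: "\<And>a b. E a b \<Longrightarrow> a \<in> V \<and> b \<in> V"
    using assms(1) unfolding simple_graph_def by blast+
  have T: "\<And>a b c. a \<noteq> b \<Longrightarrow> E a c \<Longrightarrow> E c b \<Longrightarrow> E a b"
    using assms(2) inV unfolding clus_def by blast
  have vu: "E v u" using assms(4) False unfolding Nb_def by auto
  show ?thesis
  proof
    show "Nb V E u \<subseteq> Nb V E v"
    proof
      fix x assume "x \<in> Nb V E u"
      then have "x = u \<or> E u x" unfolding Nb_def by auto
      then show "x \<in> Nb V E v"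
      proof
        assume "x = u" then show ?thesis using assms(4) by simp
      next
        assume ux: "E u x"
        show ?thesis
        proof (cases "x = v")
          case True then show ?thesis unfolding Nb_def by simp
        next
          case False then have "E v x" using T[OF _ vu ux] by blast
          then show ?thesis using inV unfolding Nb_def by blast
        qed
      qed
    qed
  next
    show "Nb V E v \<subseteq> Nb V E u"
    proof
      fix x assume "x \<in> Nb V E v"
      then have "x = v \<or> E v x" unfolding Nb_def by auto
      then show "x \<in> Nb V E u"
      proof
        assume "x = v" then show ?thesis using sym[OF vu] inV unfolding Nb_def by blast
      next
        assume vx: "E v x"
        show ?thesis
        proof (cases "x = u")
          case True then show ?thesis unfolding Nb_def by simp
        next
          case False then have "E u x" using T[OF _ sym[OF vu] vx] by blast
          then show ?thesis using inV unfolding Nb_def by blast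
        qed
      qed
    qed
  qed
qed

lemma Nb_clique:
  assumes "simple_graph V E" "clus V E" "v \<in> V"
  shows "is_clique (Nb V E v) E"
  unfolding is_clique_def
proof (intro ballI impI)
  fix u w assume u: "u \<in> Nb V E v" and w: "w \<in> Nb V E v" and uw: "u \<noteq> w"
  have sym: "\<And>a b. E a b \<Longrightarrow> E b a" and inV: "\<And>a b. E a b \<Longrightarrow> a \<in> V \<and> b \<in> V"
    using assms(1) unfolding simple_graph_def by blast+
  have "Nb V E u = Nb V E v" using Nb_eq[OF assms u] .
  then have "w \<in> Nb V E u" using w by simp
  then show "E u w" using uw unfolding Nb_def by auto
qed

lemma adj_iff:
  assumes "simple_graph V E" "clus V E" "u \<in> V" "w \<in> V"
  shows "E u w \<longleftrightarrow> u \<noteq> w \<and> Nb V E u = Nb V E w"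
proof
  assume e: "E u w"
  have "u \<noteq> w" using e assms(1) unfolding simple_graph_def by blast
  moreover have "w \<in> Nb V E u" using e assms(4) unfolding Nb_def by auto
  ultimately show "u \<noteq> w \<and> Nb V E u = Nb V E w" using Nb_eq[OF assms(1,2,3)] by auto
next
  assume "u \<noteq> w \<and> Nb V E u = Nb V E w"
  then have "w \<in> Nb V E u" "u \<noteq> w" unfolding Nb_def by auto
  then show "E u w" unfolding Nb_def by auto
qed

lemma comp_eq:
  assumes "simple_graph V E" "clus V E" "v \<in> V"
  shows "component V E v = Nb V E v"
proof
  define R where "R = (\<lambda>x y. E x y \<and> x \<in> V \<and> y \<in> V)"
  have sym: "\<And>a b. E a b \<Longrightarrow> E b a"
    using assms(1) unfolding simple_graph_def by blast
  have "R\<^sup>*\<^sup>* v u \<Longrightarrow> u \<in> Nb V E v" for u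
  proof (induction rule: rtranclp_induct)
    case base then show ?case unfolding Nb_def by simp
  next
    case (step y z)
    then have "Nb V E y = Nb V E v" using Nb_eq[OF assms] by blast
    moreover have "z \<in> Nb V E y" using step(2) unfolding R_def Nb_def by auto
    ultimately show ?case by simp
  qed
  then show "component V E v \<subseteq> Nb V E v" unfolding component_def R_def by auto
next
  show "Nb V E v \<subseteq> component V E v"
  proof
    fix u assume "u \<in> Nb V E v"
    then have "u = v \<or> E v u \<and> u \<in> V" unfolding Nb_def by auto
    then show "u \<in> component V E v" unfolding component_def using assms(3)
      by (auto intro: r_into_rtranclp)
  qed
qed




lemma cluster_iso:
  assumes "finite V" "finite W"
    and cV: "\<forall>u\<in>V. \<forall>w\<in>V. E u w \<longleftrightarrow> u \<noteq> w \<and> c u = c w"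
    and cW: "\<forall>i\<in>W. \<forall>j\<in>W. F i j \<longleftrightarrow> i \<noteq> j \<and> c' i = c' j"
    and cards: "\<forall>k. card {v\<in>V. c v = k} = card {w\<in>W. c' w = k}"
  shows "graph_iso V E W F"
proof -
  have "\<forall>k. \<exists>h. bij_betw h {v\<in>V. c v = k} {w\<in>W. c' w = k}"
    using cards assms(1,2) by (intro allI finite_same_card_bij) auto
  then obtain fk where fk: "\<And>k. bij_betw (fk k) {v\<in>V. c v = k} {w\<in>W. c' w = k}" by metis
  define f where "f v = fk (c v) v" for v
  have fW: "f v \<in> W" "c' (f v) = c v" if "v \<in> V" for v
    using bij_betwE[OF fk[of "c v"]] that unfolding f_def by auto
  have inj: "inj_on f V"
  proof
    fix u w assume u: "u \<in> V" and w: "w \<in> V" and e: "f u = f w"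
    then have "c u = c w" using fW by metis
    then have "fk (c u) u = fk (c u) w" using e unfolding f_def by simp
    moreover have "u \<in> {v\<in>V. c v = c u}" "w \<in> {v\<in>V. c v = c u}" using u w \<open>c u = c w\<close> by auto
    ultimately show "u = w" using bij_betw_imp_inj_on[OF fk[of "c u"]] by (meson inj_onD)
  qed
  have img: "f ` V = W"
  proof
    show "f ` V \<subseteq> W" using fW by auto
    show "W \<subseteq> f ` V"
    proof
      fix j assume j: "j \<in> W"
      then have "j \<in> {w\<in>W. c' w = c' j}" by simp
      then have "j \<in> fk (c' j) ` {v\<in>V. c v = c' j}"
        using bij_betw_imp_surj_on[OF fk[of "c' j"]] by simp
      then obtain v where v: "v \<in> {v\<in>V. c v = c' j}" "fk (c' j) v = j"
        by (rule imageE) auto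
      then have "f v = j" unfolding f_def by simp
      then show "j \<in> f ` V" using v by auto
    qed
  qed
  have "\<forall>u\<in>V. \<forall>w\<in>V. E u w \<longleftrightarrow> F (f u) (f w)"
  proof (intro ballI)
    fix u w assume u: "u \<in> V" and w: "w \<in> V"
    have "F (f u) (f w) \<longleftrightarrow> f u \<noteq> f w \<and> c' (f u) = c' (f w)" using cW fW u w by blast
    also have "\<dots> \<longleftrightarrow> u \<noteq> w \<and> c u = c w"
      using inj_on_eq_iff[OF inj u w] fW(2)[OF u] fW(2)[OF w] by simp
    finally show "E u w \<longleftrightarrow> F (f u) (f w)" using cV u w by blast
  qed
  then show ?thesis unfolding graph_iso_def bij_betw_def using inj img by blast
qed

lemma res_card:
  assumes "t \<ge> 1" "k < t"
  shows "card {j\<in>{0..<n}. j mod t = k} = (if k < n mod t then n div t + 1 else n div t)"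
proof -
  define q where "q = n div t"
  define r where "r = n mod t"
  define m where "m = (if k < r then q + 1 else q)"
  have n: "n = q * t + r" "r < t" unfolding q_def r_def using assms by auto
  have iff: "i * t + k < n \<longleftrightarrow> i < m" for i
  proof
    assume a: "i * t + k < n"
    show "i < m"
    proof (rule ccontr)
      assume "\<not> i < m"
      then have "i \<ge> m" by simp
      show False
      proof (cases "k < r")
        case True
        then have "i \<ge> q + 1" using \<open>i \<ge> m\<close> unfolding m_def by simp
        then have "i * t \<ge> (q+1) * t" by (rule mult_le_mono1)
        then show False using a n by (simp add: algebra_simps)
      next
        case False
        then have "i \<ge> q" using \<open>i \<ge> m\<close> unfolding m_def by simp
        then have "i * t \<ge> q * t" by (rule mult_le_mono1)
        then show False using a n False by linarith
      qed
    qed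
  next
    assume a: "i < m"
    show "i * t + k < n"
    proof (cases "i < q")
      case True
      then have "(i+1) * t \<le> q * t" by (intro mult_le_mono1) simp
      then show ?thesis using n assms(2) by (simp add: algebra_simps)
    next
      case False
      then have "i = q" "k < r" using a unfolding m_def by (auto split: if_splits)
      then show ?thesis using n by simp
    qed
  qed
  have eq: "{j\<in>{0..<n}. j mod t = k} = (\<lambda>i. i * t + k) ` {..<m}"
  proof
    show "{j\<in>{0..<n}. j mod t = k} \<subseteq> (\<lambda>i. i * t + k) ` {..<m}"
    proof
      fix j assume j: "j \<in> {j\<in>{0..<n}. j mod t = k}"
      then have jeq: "(j div t) * t + k = j" "j < n" using div_mult_mod_eq[of j t] by auto
      then have "j div t < m" using iff[of "j div t"] by simp
      then show "j \<in> (\<lambda>i. i * t + k) ` {..<m}" using jeq(1) by (intro image_eqI[of _ _ "j div t"]) auto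
    qed
    show "(\<lambda>i. i * t + k) ` {..<m} \<subseteq> {j\<in>{0..<n}. j mod t = k}"
    proof
      fix x assume "x \<in> (\<lambda>i. i * t + k) ` {..<m}"
      then obtain i where i: "i < m" "x = i * t + k" by blast
      have "x < n" using iff[of i] i by simp
      moreover have "x mod t = k" unfolding i(2) using assms(2) by simp
      ultimately show "x \<in> {j\<in>{0..<n}. j mod t = k}" by simp
    qed
  qed
  have "inj_on (\<lambda>i. i * t + k) {..<m}"
  proof (rule inj_onI)
    fix x y assume "x * t + k = y * t + k"
    then have "x * t = y * t" by simp
    then show "x = y" using assms(1) by simp
  qed
  then have "card {j\<in>{0..<n}. j mod t = k} = m" unfolding eq by (simp add: card_image)
  then show ?thesis unfolding m_def q_def r_def .
qed




lemma fiber_Nb: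
  assumes "simple_graph V E" "clus V E" "w \<in> V"
  shows "{v\<in>V. Nb V E v = Nb V E w} = Nb V E w"
proof
  show "{v\<in>V. Nb V E v = Nb V E w} \<subseteq> Nb V E w" unfolding Nb_def by auto
  show "Nb V E w \<subseteq> {v\<in>V. Nb V E v = Nb V E w}"
    using Nb_eq[OF assms] Nb_sub[OF assms(3)] by blast
qed

lemma sum_blocks:
  assumes "simple_graph V E" "clus V E"
  shows "(\<Sum>v\<in>V. f (Nb V E v)) = (\<Sum>X\<in>Nb V E ` V. real (card X) * f X)"
proof -
  have fin: "finite V" using assms(1) unfolding simple_graph_def by blast
  have "(\<Sum>v\<in>V. f (Nb V E v)) = (\<Sum>X\<in>Nb V E ` V. \<Sum>v\<in>{v\<in>V. Nb V E v = X}. f (Nb V E v))"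
    by (rule sum.image_gen[OF fin])
  also have "\<dots> = (\<Sum>X\<in>Nb V E ` V. real (card X) * f X)"
  proof (rule sum.cong)
    fix X assume "X \<in> Nb V E ` V"
    then obtain w where w: "w \<in> V" "X = Nb V E w" by blast
    have "(\<Sum>v\<in>{v\<in>V. Nb V E v = X}. f (Nb V E v)) = (\<Sum>v\<in>{v\<in>V. Nb V E v = X}. f X)"
      by (rule sum.cong) auto
    also have "\<dots> = real (card X) * f X" using fiber_Nb[OF assms w(1)] w(2) by simp
    finally show "(\<Sum>v\<in>{v\<in>V. Nb V E v = X}. f (Nb V E v)) = real (card X) * f X" .
  qed simp
  finally show ?thesis .
qed

lemma sum_hw_blocks:
  assumes "simple_graph V E" "clus V E" "\<forall>v\<in>V. dg V E v \<ge> 1"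
  shows "(\<Sum>v\<in>V. hw (dg V E v)) = 2 * real (card (Nb V E ` V))"
proof -
  have fin: "finite V" and irr: "\<forall>u. \<not> E u u" using assms(1) unfolding simple_graph_def by blast+
  have "(\<Sum>v\<in>V. hw (dg V E v)) = (\<Sum>v\<in>V. 2 / real (card (Nb V E v)))"
  proof (rule sum.cong)
    fix v assume "v \<in> V"
    then have "dg V E v \<ge> 1" using assms(3) by blast
    then show "hw (dg V E v) = 2 / real (card (Nb V E v))"
      using Nb_card[OF fin, of E v] irr unfolding hw_def by (auto simp: add.commute)
  qed simp
  also have "\<dots> = (\<Sum>X\<in>Nb V E ` V. real (card X) * (2 / real (card X)))"
    by (rule sum_blocks[OF assms(1,2)])
  also have "\<dots> = (\<Sum>X\<in>Nb V E ` V. 2)"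
  proof (rule sum.cong)
    fix X assume "X \<in> Nb V E ` V"
    then obtain w where w: "w \<in> V" "X = Nb V E w" by blast
    have "card X > 0" using w fin Nb_sub[OF w(1), of E] unfolding Nb_def
      by (metis card_0_eq empty_not_insert finite_subset gr0I)
    then show "real (card X) * (2 / real (card X)) = 2" by simp
  qed simp
  finally show ?thesis by simp
qed

lemma cluster_to_Gnt:
  assumes sg: "simple_graph V E" and cl: "clus V E" and cV: "card V = n" and t1: "t \<ge> 1"
    and deg: "\<forall>v\<in>V. card (Nb V E v) = n div t \<or> card (Nb V E v) = n div t + 1"
    and cP: "card (Nb V E ` V) = t"
  shows "graph_iso V E {0..<n} (Gnt_adj t)"
proof -
  define q where "q = n div t"
  define r where "r = n mod t"
  define P where "P = Nb V E ` V"
  have fin: "finite V" and irr: "\<forall>u. \<not> E u u" using sg unfolding simple_graph_def by blast+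
  have finP: "finite P" unfolding P_def using fin by simp
  have nq: "n = q * t + r" "r < t" unfolding q_def r_def using t1 by auto
  have Pc: "\<forall>X\<in>P. card X = q \<or> card X = q + 1" using deg unfolding P_def q_def by auto
  define Pb where "Pb = {X\<in>P. card X = q + 1}"
  define Pa where "Pa = P - Pb"
  have "real n = (\<Sum>v\<in>V. (\<lambda>X. 1::real) (Nb V E v))" using cV by simp
  also have "\<dots> = (\<Sum>X\<in>P. real (card X) * 1)" unfolding P_def by (rule sum_blocks[OF sg cl])
  finally have "real n = real (\<Sum>X\<in>P. card X)" by simp
  then have "n = (\<Sum>X\<in>P. card X)" by linarith
  also have "\<dots> = (\<Sum>X\<in>P. q + (if card X = q + 1 then 1 else 0))"
    by (rule sum.cong) (use Pc in auto)
  also have "\<dots> = q * card P + card Pb"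
  proof -
    have "(\<Sum>X\<in>P. (if card X = q + 1 then 1 else 0)) = (\<Sum>X\<in>Pb. (1::nat))"
      unfolding Pb_def using sum.inter_filter[OF finP, of "\<lambda>X. (1::nat)" "\<lambda>X. card X = q + 1"] by simp
    then show ?thesis by (simp add: sum.distrib)
  qed
  finally have "card Pb = r" using nq cP unfolding P_def by simp
  have PbP: "Pb \<subseteq> P" unfolding Pb_def by auto
  have cPa: "card Pa = t - r" unfolding Pa_def using card_Diff_subset[OF finite_subset[OF PbP finP] PbP]
      \<open>card Pb = r\<close> cP unfolding P_def by simp
  obtain fb where fb: "bij_betw fb Pb {0..<r}"
    using finite_same_card_bij[of Pb "{0..<r}"] finite_subset[OF PbP finP] \<open>card Pb = r\<close> by auto
  obtain fa where fa: "bij_betw fa Pa {r..<t}"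
    using finite_same_card_bij[of Pa "{r..<t}"] finP cPa unfolding Pa_def by auto
  define idx where "idx X = (if X \<in> Pb then fb X else fa X)" for X
  have idx_b: "X \<in> Pb \<Longrightarrow> idx X < r" for X using bij_betwE[OF fb] unfolding idx_def by auto
  have idx_a: "X \<in> Pa \<Longrightarrow> r \<le> idx X \<and> idx X < t" for X
    using bij_betwE[OF fa] unfolding idx_def Pa_def by auto
  have idx_t: "X \<in> P \<Longrightarrow> idx X < t" for X using idx_a idx_b nq(2) unfolding Pa_def
    by (meson DiffI order_less_trans)
  have inj: "inj_on idx P"
  proof
    fix X Y assume X: "X \<in> P" and Y: "Y \<in> P" and e: "idx X = idx Y"
    show "X = Y"
    proof (cases "X \<in> Pb")
      case True
      show ?thesis
      proof (cases "Y \<in> Pb")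
        case True
        then show ?thesis using \<open>X \<in> Pb\<close> e bij_betw_imp_inj_on[OF fb] unfolding idx_def
          by (simp add: inj_on_eq_iff)
      next
        case False
        then have "Y \<in> Pa" using Y unfolding Pa_def by simp
        then show ?thesis using idx_a[of Y] idx_b[OF \<open>X \<in> Pb\<close>] e by simp
      qed
    next
      case False
      then have Xa: "X \<in> Pa" using X unfolding Pa_def by simp
      show ?thesis
      proof (cases "Y \<in> Pb")
        case True
        then show ?thesis using idx_a[OF Xa] idx_b[of Y] e by simp
      next
        case False
        then have "Y \<in> Pa" using Y unfolding Pa_def by simp
        then show ?thesis using Xa \<open>X \<notin> Pb\<close> False e bij_betw_imp_inj_on[OF fa] unfolding idx_def
          by (simp add: inj_on_eq_iff)
      qed
    qed
  qed
  have surj: "\<exists>X\<in>P. idx X = k \<and> card X = (if k < r then q + 1 else q)" if "k < t" for k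
  proof (cases "k < r")
    case True
    then have "k \<in> fb ` Pb" using bij_betw_imp_surj_on[OF fb] by auto
    then obtain X where "X \<in> Pb" "fb X = k" by blast
    then show ?thesis using True unfolding idx_def Pb_def by auto
  next
    case False
    then have "k \<in> fa ` Pa" using bij_betw_imp_surj_on[OF fa] that by auto
    then obtain X where X: "X \<in> Pa" "fa X = k" by blast
    then have "card X = q" using Pc unfolding Pa_def Pb_def by auto
    then show ?thesis using X False unfolding idx_def Pa_def by auto
  qed
  define c where "c v = idx (Nb V E v)" for v
  show ?thesis
  proof (rule cluster_iso[where c=c and c'="\<lambda>j. j mod t"])
    show "finite V" by (rule fin)
    show "finite {0..<n}" by simp
    show "\<forall>u\<in>V. \<forall>w\<in>V. E u w \<longleftrightarrow> u \<noteq> w \<and> c u = c w"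
    proof (intro ballI)
      fix u w assume u: "u \<in> V" and w: "w \<in> V"
      have "c u = c w \<longleftrightarrow> Nb V E u = Nb V E w" unfolding c_def
        using inj_on_eq_iff[OF inj] u w unfolding P_def by blast
      then show "E u w \<longleftrightarrow> u \<noteq> w \<and> c u = c w" using adj_iff[OF sg cl u w] by simp
    qed
    show "\<forall>i\<in>{0..<n}. \<forall>j\<in>{0..<n}. Gnt_adj t i j \<longleftrightarrow> i \<noteq> j \<and> i mod t = j mod t"
      unfolding Gnt_adj_def by simp
    show "\<forall>k. card {v\<in>V. c v = k} = card {w\<in>{0..<n}. w mod t = k}"
    proof
      fix k
      show "card {v\<in>V. c v = k} = card {w\<in>{0..<n}. w mod t = k}"
      proof (cases "k < t")
        case False
        have "{v\<in>V. c v = k} = {}" using idx_t False unfolding c_def P_def by force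
        moreover have "{w\<in>{0..<n}. w mod t = k} = {}" using False t1
          by (auto dest: mod_less_divisor[of t])
        ultimately show ?thesis by (simp only: card.empty)
      next
        case True
        obtain X where X: "X \<in> P" "idx X = k" "card X = (if k < r then q + 1 else q)"
          using surj[OF True] by blast
        obtain w where w: "w \<in> V" "X = Nb V E w" using X(1) unfolding P_def by blast
        have "{v\<in>V. c v = k} = {v\<in>V. Nb V E v = X}"
        proof -
          have "c v = k \<longleftrightarrow> Nb V E v = X" if "v \<in> V" for v
            unfolding c_def using inj_on_eq_iff[OF inj, of "Nb V E v" X] X(1,2) that
            by (auto simp: P_def)
          then show ?thesis by blast
        qed
        also have "\<dots> = X" using fiber_Nb[OF sg cl w(1)] w(2) by simp
        finally show ?thesis using X(3) res_card[OF t1 True, of n] unfolding q_def r_def by simp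
      qed
    qed
  qed
qed




lemma comps_ok:
  assumes sg: "simple_graph V E" and cl: "clus V E" and d: "\<forall>v\<in>V. dg V E v \<in> {0,2,3}"
  shows "\<forall>C\<in>components V E. card C \<in> {1, 3, 4} \<and> is_clique C E"
proof
  fix C assume "C \<in> components V E"
  then obtain v where v: "v \<in> V" "C = component V E v" unfolding components_def by blast
  have fin: "finite V" and irr: "\<forall>u. \<not> E u u" using sg unfolding simple_graph_def by blast+
  have C: "C = Nb V E v" using comp_eq[OF sg cl v(1)] v(2) by simp
  have "card C = dg V E v + 1" using Nb_card[OF fin] irr C by simp
  then have "card C \<in> {1,3,4}" using d v(1) by auto
  then show "card C \<in> {1, 3, 4} \<and> is_clique C E" using Nb_clique[OF sg cl v(1)] C by simp
qed

theorem theorem4p1: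
  fixes V :: "'a set" and E :: "'a \<Rightarrow> 'a \<Rightarrow> bool" and n t :: nat
  assumes "n \<ge> 1" and "t \<ge> 1"
    and "simple_graph V E" and "card V = n"
    and "\<not> has_induced_forest V E (2*t + 1)"
  shows "card (edges V E) \<ge> g n t
     \<and> (card (edges V E) = g n t \<and> n < 4*t \<longrightarrow>
           (\<forall>C\<in>components V E. card C \<in> {1, 3, 4} \<and> is_clique C E))
     \<and> (card (edges V E) = g n t \<and> n \<ge> 4*t \<longrightarrow>
           graph_iso V E {0..<n} (Gnt_adj t))"
proof -
  note sg = assms(3)
  have fin: "finite V" and inV: "\<forall>u w. E u w \<longrightarrow> u \<in> V \<and> w \<in> V"
    and sym: "\<forall>u w. E u w \<longrightarrow> E w u" and irr: "\<forall>u. \<not> E u u"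
    using sg unfolding simple_graph_def by blast+
  define m where "m = card (edges V E)"
  define H where "H = (\<Sum>v\<in>V. hw (dg V E v))"
  have hs: "2 * m = (\<Sum>v\<in>V. dg V E v)" unfolding m_def by (rule handshake[OF fin sym irr])
  then have hsr: "2 * real m = (\<Sum>v\<in>V. real (dg V E v))" by (metis of_nat_mult of_nat_numeral of_nat_sum)
  have H2t: "H \<le> 2 * real t"
  proof -
    obtain S where S: "S \<subseteq> V" "induced_forest S E" "H \<le> real (card S)"
      using aks[OF fin sym irr] unfolding H_def by blast
    have "card S < 2*t+1" using forest_bound[OF assms(5) S(1,2) fin] .
    then show ?thesis using S(3) by linarith
  qed
  have clusI: "clus V E" if "H \<ge> 2 * real t"
  proof (rule ccontr)
    assume "\<not> clus V E"
    then obtain a b c where abc: "a \<in> V" "b \<in> V" "c \<in> V" "a \<noteq> b" "E a c" "E c b" "\<not> E a b"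
      unfolding clus_def by blast
    obtain S where S: "S \<subseteq> V" "induced_forest S E" "H < real (card S)"
      using aks_strict[OF fin sym irr abc] unfolding H_def by blast
    have "card S < 2*t+1" using forest_bound[OF assms(5) S(1,2) fin] .
    then show False using S(3) that by linarith
  qed
  show ?thesis
  proof (cases "n < 2*t")
    case True
    have g0: "g n t = 0" using True by simp
    have part2: "\<forall>C\<in>components V E. card C \<in> {1, 3, 4} \<and> is_clique C E" if "m = 0"
    proof -
      have fe: "finite (edges V E)"
      proof -
        have "edges V E \<subseteq> Pow V" unfolding edges_def by auto
        then show ?thesis using fin by (meson finite_Pow_iff finite_subset)
      qed
      have noE: "\<not> E u w" for u w
      proof
        assume "E u w"
        then have "{u,w} \<in> edges V E" using inV by (intro edgeI) auto
        then have "card (edges V E) > 0" using fe by (auto simp: card_gt_0_iff)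
        then show False using that unfolding m_def by simp
      qed
      have "clus V E" unfolding clus_def using noE by blast
      moreover have "\<forall>v\<in>V. dg V E v \<in> {0,2,3}" unfolding dg_def using noE by simp
      ultimately show ?thesis using comps_ok[OF sg] by blast
    qed
    show ?thesis using g0 part2 True unfolding m_def by auto
  next
    case False
    then have n2t: "n \<ge> 2*t" by simp
    show ?thesis
    proof (cases "n < 4*t")
      case True
      have gv: "g n t = 3*(n - 2*t)" using n2t True by simp
      have s1: "(\<Sum>v\<in>V. 6 * hw (dg V E v) + real (dg V E v) - 6) = 6 * H + 2 * real m - 6 * real n"
        unfolding H_def hsr using assms(4) by (simp add: sum.distrib sum_subtractf sum_distrib_left)
      have nn: "\<forall>v\<in>V. 6 * hw (dg V E v) + real (dg V E v) - 6 \<ge> 0" 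
      proof
        fix v show "6 * hw (dg V E v) + real (dg V E v) - 6 \<ge> 0" using lin1[of "dg V E v"] by linarith
      qed
      have "(\<Sum>v\<in>V. 6 * hw (dg V E v) + real (dg V E v) - 6) \<ge> 0" using nn by (simp add: sum_nonneg)
      then have mlow: "real m \<ge> 3 * real n - 6 * real t" using s1 H2t by linarith
      then have p1: "m \<ge> g n t" unfolding gv using n2t by (simp add: of_nat_diff)
      have p2: "\<forall>C\<in>components V E. card C \<in> {1, 3, 4} \<and> is_clique C E" if "m = g n t"
      proof -
        have mr: "real m = 3 * real n - 6 * real t" using that gv n2t by (simp add: of_nat_diff)
        then have "(\<Sum>v\<in>V. 6 * hw (dg V E v) + real (dg V E v) - 6) \<le> 0" using s1 H2t by linarith
        then have "(\<Sum>v\<in>V. 6 * hw (dg V E v) + real (dg V E v) - 6) = 0"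
          using \<open>(\<Sum>v\<in>V. 6 * hw (dg V E v) + real (dg V E v) - 6) \<ge> 0\<close> by linarith
        then have z: "\<forall>v\<in>V. 6 * hw (dg V E v) + real (dg V E v) - 6 = 0"
          using sum_nonneg_eq_0_iff[OF fin nn[rule_format]] by (simp only:)
        have "\<forall>v\<in>V. dg V E v \<in> {0,2,3}"
        proof
          fix v assume "v \<in> V"
          then have "6 * hw (dg V E v) + real (dg V E v) = 6" using z by force
          then show "dg V E v \<in> {0,2,3}" using lin1_strict[of "dg V E v"] by auto
        qed
        moreover have "H \<ge> 2 * real t" using s1 mr \<open>(\<Sum>v\<in>V. 6 * hw (dg V E v) + real (dg V E v) - 6) = 0\<close>
          by linarith
        ultimately show ?thesis using comps_ok[OF sg clusI] by simp
      qed
      show ?thesis using p1 p2 True unfolding m_def by auto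
    next
      case False
      then have n4t: "n \<ge> 4*t" by simp
      define q where "q = n div t"
      define r where "r = n mod t"
      have nq: "n = q * t + r" "r < t" unfolding q_def r_def using assms(2) by auto
      have q4: "q \<ge> 4" unfolding q_def using n4t assms(2)
        by (metis div_le_mono nonzero_mult_div_cancel_right not_one_le_zero)
      have g2: "2 * g n t = q * (n + r - t)" using g_big[OF assms(2) n4t] unfolding q_def r_def .
      have g2r: "2 * real (g n t) = real q * (real n + real r - real t)"
      proof -
        have "real (2 * g n t) = real (q * (n + r - t))" using g2 by simp
        then show ?thesis using n4t by (simp add: of_nat_diff)
      qed
      have nr: "real n = real q * real t + real r" using nq by simp
      have hsr2: "(\<Sum>v\<in>V. 2 * real (dg V E v)) = 4 * real m"
        using hsr by (simp add: sum_distrib_left[symmetric])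
      define K where "K = real q * (real q + 1)"
      have s1: "(\<Sum>v\<in>V. 2 * real (dg V E v) + K * hw (dg V E v) - 4 * real q)
          = 4 * real m + K * H - 4 * real q * real n"
        unfolding H_def using hsr2 assms(4) by (simp add: sum.distrib sum_subtractf sum_distrib_left)
      have nn: "\<forall>v\<in>V. 2 * real (dg V E v) + K * hw (dg V E v) - 4 * real q \<ge> 0"
      proof
        fix v show "2 * real (dg V E v) + K * hw (dg V E v) - 4 * real q \<ge> 0"
          using lin2[OF q4, of "dg V E v"] unfolding K_def by linarith
      qed
      have s0: "(\<Sum>v\<in>V. 2 * real (dg V E v) + K * hw (dg V E v) - 4 * real q) \<ge> 0"
        using nn by (simp add: sum_nonneg)
      have K0: "K \<ge> 0" unfolding K_def by simp
      have KH: "K * H \<le> K * (2 * real t)" using H2t K0 by (rule mult_left_mono)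
      have key: "4 * real (g n t) = 4 * real q * real n - K * (2 * real t)"
        using g2r nr unfolding K_def by (simp add: algebra_simps)
      have p1: "m \<ge> g n t"
      proof -
        have "4 * real m \<ge> 4 * real (g n t)" using s1 s0 KH key by linarith
        then show ?thesis by simp
      qed
      have p3: "graph_iso V E {0..<n} (Gnt_adj t)" if "m = g n t"
      proof -
        have sle: "(\<Sum>v\<in>V. 2 * real (dg V E v) + K * hw (dg V E v) - 4 * real q) \<le> 0"
          using s1 KH key that by simp
        then have z0: "(\<Sum>v\<in>V. 2 * real (dg V E v) + K * hw (dg V E v) - 4 * real q) = 0"
          using s0 by linarith
        then have z: "\<forall>v\<in>V. 2 * real (dg V E v) + K * hw (dg V E v) - 4 * real q = 0"
          using sum_nonneg_eq_0_iff[OF fin nn[rule_format]] by (simp only:)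
        have dgq: "\<forall>v\<in>V. dg V E v = q - 1 \<or> dg V E v = q"
        proof
          fix v assume "v \<in> V"
          then have "2 * real (dg V E v) + K * hw (dg V E v) = 4 * real q" using z by force
          then show "dg V E v = q - 1 \<or> dg V E v = q" using lin2_strict[OF q4, of "dg V E v"]
            unfolding K_def by force
        qed
        have "K * H = K * (2 * real t)" using z0 s1 key that by simp
        moreover have "K > 0" unfolding K_def using q4 by simp
        ultimately have H2: "H = 2 * real t" by simp
        then have cl: "clus V E" using clusI by simp
        have d1: "\<forall>v\<in>V. dg V E v \<ge> 1" using dgq q4 by force
        have "2 * real (card (Nb V E ` V)) = 2 * real t"
          using sum_hw_blocks[OF sg cl d1] H2 unfolding H_def by simp
        then have cP: "card (Nb V E ` V) = t" by simp
        have deg: "\<forall>v\<in>V. card (Nb V E v) = n div t \<or> card (Nb V E v) = n div t + 1"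
        proof
          fix v assume v: "v \<in> V"
          have "card (Nb V E v) = dg V E v + 1" using Nb_card[OF fin] irr by simp
          then show "card (Nb V E v) = n div t \<or> card (Nb V E v) = n div t + 1"
            using dgq v q4 unfolding q_def by force
        qed
        show ?thesis by (rule cluster_to_Gnt[OF sg cl assms(4) assms(2) deg cP])
      qed
      show ?thesis using p1 p3 False unfolding m_def by auto
    qed
  qed
qed


end
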